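(* Let $L$ be a compact convex subset of $\mathbb{R}^n$, and let $Q$ be a polytope in $\mathbb{R}^n$ having at most $d+1$ vertices, where $d < n$. Suppose that, for every $d$-dimensional linear subspace $\xi$, there exists $v \in \xi$ such that $Q_\xi + v \subseteq L_\xi$. Then there exists $v_0 \in \mathbb{R}^n$ such that $Q + v_0 \subseteq L$.
   Context: For a set $S\subseteq\mathbb{R}^n$ and a linear subspace $\xi$, $S_\xi$ denotes the orthogonal projection of $S$ onto $\xi$. *)

theory Defs
  imports "HOL-Analysis.Analysis"
begin

definition orth_proj :: "'a::euclidean_space set \<Rightarrow> 'a \<Rightarrow> 'a" where
  "orth_proj xi x = (THE p. p \<in> xi \<and> (\<forall>y\<in>xi. (x - p) \<bullet> y = 0))"

definition proj_set :: "'a::euclidean_space set \<Rightarrow> 'a set \<Rightarrow> 'a set" where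
  "proj_set xi S = orth_proj xi ` S"

definition vertices :: "'a::euclidean_space set \<Rightarrow> 'a set" where
  "vertices Q = {v. v extreme_point_of Q}"

end

theory Submission
  imports Defs
begin

lemma exists_superspace:
  fixes U :: "'a::euclidean_space set"
  assumes "dim U \<le> d" "d \<le> DIM('a)"
  shows "\<exists>xi. subspace xi \<and> U \<subseteq> xi \<and> dim xi = d"
proof -
  obtain B where B: "B \<subseteq> U" "independent B" "U \<subseteq> span B" "card B = dim U"
    using basis_exists[of U] by metis
  obtain B' where B': "B \<subseteq> B'" "independent B'" "UNIV \<subseteq> span B'"
  proof (rule maximal_independent_subset_extend[OF subset_UNIV B(2)])
    fix B' assume "B \<subseteq> B'" "B' \<subseteq> UNIV" "independent B'" "UNIV \<subseteq> span B'"
    then show thesis using that by simp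
  qed
  have finB': "finite B'" using B'(2) independent_imp_finite by blast
  have e1: "dim B' = card B'" using B'(2) by (rule dim_eq_card_independent)
  have "span B' = UNIV" using B'(3) by auto
  hence "dim B' = dim (UNIV::'a set)" by (metis dim_span)
  hence cB': "card B' = DIM('a)" using e1 by (simp add: dim_UNIV)
  have finB: "finite B" using B'(1) finB' by (rule finite_subset)
  have "card (B' - B) = card B' - card B" using finB B'(1) by (rule card_Diff_subset)
  hence "d - card B \<le> card (B' - B)" using assms cB' by simp
  then obtain T where T: "T \<subseteq> B' - B" "card T = d - card B" "finite T"
    by (rule obtain_subset_with_card_n)
  have finT: "finite T" using T(1) finB' by (meson finite_Diff finite_subset)
  have disj: "B \<inter> T = {}" using T(1) by blast
  have "card (B \<union> T) = card B + card T" using finB finT disj by (rule card_Un_disjoint)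
  hence cC: "card (B \<union> T) = d" using T(2) B(4) assms(1) by simp
  have "B \<union> T \<subseteq> B'" using B'(1) T(1) by blast
  hence indC: "independent (B \<union> T)" using B'(2) independent_mono by blast
  show ?thesis
  proof (intro exI conjI)
    show "subspace (span (B \<union> T))" by simp
    have "span B \<subseteq> span (B \<union> T)" by (rule span_mono) blast
    thus "U \<subseteq> span (B \<union> T)" using B(3) by blast
    show "dim (span (B \<union> T)) = d" using indC cC by (simp add: dim_span dim_eq_card_independent)
  qed
qed

lemma orth_proj_prop:
  fixes xi :: "'a::euclidean_space set"
  assumes "subspace xi"
  shows "orth_proj xi x \<in> xi \<and> (\<forall>y\<in>xi. (x - orth_proj xi x) \<bullet> y = 0)"
proof -
  obtain y z where yz: "y \<in> span xi" "\<And>w. w \<in> span xi \<Longrightarrow> orthogonal z w" "x = y + z"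
  proof (rule orthogonal_subspace_decomp_exists[of xi x])
    fix y z assume "y \<in> span xi" "\<And>w. w \<in> span xi \<Longrightarrow> orthogonal z w" "x = y + z"
    then show thesis by (rule that)
  qed
  have sp: "span xi = xi" using assms by (rule span_eq_iff[THEN iffD2])
  have xy: "x - y = z" using yz(3) by simp
  have ex: "y \<in> xi \<and> (\<forall>w\<in>xi. (x - y) \<bullet> w = 0)"
    using yz(1,2) sp unfolding xy orthogonal_def by simp
  have uniq: "p = y" if "p \<in> xi \<and> (\<forall>w\<in>xi. (x - p) \<bullet> w = 0)" for p
  proof -
    have d: "p - y \<in> xi" using assms that ex by (intro subspace_diff) auto
    have a: "(x - p) \<bullet> (p - y) = 0" using that d by blast
    have b: "(x - y) \<bullet> (p - y) = 0" using ex d by blast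
    have "(p - y) \<bullet> (p - y) = (x - y) \<bullet> (p - y) - (x - p) \<bullet> (p - y)"
      by (simp add: inner_diff_left)
    hence "(p - y) \<bullet> (p - y) = 0" using a b by simp
    thus ?thesis by simp
  qed
  show ?thesis unfolding orth_proj_def
    by (rule theI[of _ y]) (use ex uniq in blast)+
qed

lemma orth_proj_inner:
  fixes xi :: "'a::euclidean_space set"
  assumes "subspace xi" "u \<in> xi"
  shows "u \<bullet> orth_proj xi x = u \<bullet> x"
proof -
  have "(x - orth_proj xi x) \<bullet> u = 0" using orth_proj_prop[OF assms(1)] assms(2) by blast
  hence "u \<bullet> (x - orth_proj xi x) = 0" by (simp only: inner_commute)
  hence "u \<bullet> x - u \<bullet> orth_proj xi x = 0" by (simp only: inner_diff_right)
  thus ?thesis by linarith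
qed

theorem lemma2p6:
  fixes L Q :: "'a::euclidean_space set" and d :: nat
  assumes "compact L" and "convex L"
    and "polytope Q" and "card (vertices Q) \<le> d + 1"
    and "d < DIM('a)"
    and "\<And>xi. subspace xi \<Longrightarrow> dim xi = d \<Longrightarrow>
           \<exists>v\<in>xi. (\<lambda>x. x + v) ` proj_set xi Q \<subseteq> proj_set xi L"
  shows "\<exists>v0. (\<lambda>x. x + v0) ` Q \<subseteq> L"
proof -
  define V where "V = vertices Q"
  have QV: "Q = convex hull V"
    unfolding V_def vertices_def
    using Krein_Milman_Minkowski polytope_imp_compact polytope_imp_convex assms(3) by blast
  obtain W where W: "finite W" "Q = convex hull W" using assms(3) polytope_def by blast
  have finV: "finite V"
    using W extreme_point_of_convex_hull unfolding V_def vertices_def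
    by (metis (no_types, lifting) finite_subset mem_Collect_eq subsetI)
  show ?thesis
  proof (cases "V = {}")
    case True
    then show ?thesis using QV by simp
  next
    case False
    note nV = False
    have VQ: "V \<subseteq> Q" unfolding QV by (rule hull_subset)
    obtain q0 where q0: "q0 \<in> V" using nV by blast
    have "dim ({}::'a set) \<le> d" by simp
    then obtain xi0 :: "'a set" where xi0: "subspace xi0" "dim xi0 = d"
      using exists_superspace[of "{}::'a set" d] assms(5) by auto
    obtain v00 where v00: "(\<lambda>x. x + v00) ` proj_set xi0 Q \<subseteq> proj_set xi0 L"
      using assms(6)[OF xi0] by (elim bexE) blast
    have "orth_proj xi0 q0 + v00 \<in> proj_set xi0 L"
      using v00 q0 VQ unfolding proj_set_def by blast
    hence "L \<noteq> {}" unfolding proj_set_def by blast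
    define K where "K q = (\<lambda>l. l - q) ` L" for q
    have Kc: "compact (K q)" for q unfolding K_def
      using assms(1) by (rule compact_translation_subtract)
    have Kcl: "closed (K q)" for q using Kc compact_imp_closed by blast
    have Kcv: "convex (K q)" for q unfolding K_def
      using assms(2) by (rule convex_translation_subtract)
    have Kne: "K q \<noteq> {}" for q unfolding K_def using \<open>L \<noteq> {}\<close> by simp
    define c where "c q w = closest_point (K q) w" for q w
    define g where "g w = (\<Sum>q\<in>V. (dist w (c q w))^2)" for w
    have gcont: "continuous_on A g" for A
    proof -
      have "continuous_on A (\<lambda>w. (dist w (c q w))^2)" for q
        unfolding c_def
        by (intro continuous_on_power continuous_on_dist continuous_on_id
            continuous_on_closest_point[OF Kcv Kcl Kne])
      hence "continuous_on A (\<lambda>w. \<Sum>q\<in>V. (dist w (c q w))^2)"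
        by (intro continuous_on_sum) blast
      thus ?thesis unfolding g_def[abs_def] .
    qed
    have "bounded L" using assms(1) by (rule compact_imp_bounded)
    then obtain B where B: "\<And>x. x \<in> L \<Longrightarrow> norm x \<le> B"
      unfolding bounded_iff by blast
    define R where "R = B + norm q0 + sqrt (g 0)"
    have g0: "0 \<le> g w" for w unfolding g_def by (intro sum_nonneg) simp
    have R0: "(0::'a) \<in> cball 0 R"
    proof -
      obtain l where "l \<in> L" using \<open>L \<noteq> {}\<close> by blast
      hence "0 \<le> B" using B[of l] norm_ge_zero[of l] by linarith
      moreover have "0 \<le> sqrt (g 0)" using g0[of 0] by simp
      moreover have "0 \<le> norm q0" by simp
      ultimately show ?thesis unfolding R_def by simp
    qed
    have "\<exists>x\<in>cball 0 R. \<forall>y\<in>cball 0 R. g x \<le> g y"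
      using R0 by (intro continuous_attains_inf compact_cball gcont) blast
    then obtain vs where vs: "vs \<in> cball 0 R" "\<And>y. y \<in> cball 0 R \<Longrightarrow> g vs \<le> g y"
      by blast
    have vsmin: "g vs \<le> g w" for w
    proof (cases "w \<in> cball 0 R")
      case True then show ?thesis using vs(2) by blast
    next
      case False
      have "c q0 w \<in> K q0" unfolding c_def using Kcl Kne by (rule closest_point_in_set)
      then obtain l where l: "l \<in> L" "c q0 w = l - q0" unfolding K_def by blast
      have "norm (l - q0) \<le> norm l + norm q0" by (rule norm_triangle_ineq4)
      hence nc: "norm (c q0 w) \<le> B + norm q0" using l B[of l] by simp
      have nw: "norm w > R" using False by simp
      have "norm w \<le> norm (w - c q0 w) + norm (c q0 w)" using norm_triangle_ineq[of "w - c q0 w" "c q0 w"] by simp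
      hence "dist w (c q0 w) > sqrt (g 0)" using nc nw unfolding R_def dist_norm by linarith
      hence "(dist w (c q0 w))^2 > (sqrt (g 0))^2"
        using real_sqrt_ge_zero[OF g0[of 0]] by (intro power_strict_mono) auto
      hence "(dist w (c q0 w))^2 > g 0" using g0[of 0] by simp
      moreover have "(dist w (c q0 w))^2 \<le> g w" unfolding g_def
        by (rule member_le_sum) (use q0 finV in auto)
      moreover have "g vs \<le> g 0" using vs(2) R0 by blast
      ultimately show ?thesis by linarith
    qed
    define u where "u q = vs - c q vs" for q
    define S where "S = (\<Sum>q\<in>V. u q)"
    define N where "N = real (card V)"
    have Npos: "N > 0" unfolding N_def using nV finV by (simp add: card_gt_0_iff)
    have S0: "S = 0"
    proof -
      define h where "h = - (1/N) *\<^sub>R S"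
      have "g (vs + h) \<le> (\<Sum>q\<in>V. (dist (vs + h) (c q vs))^2)"
        unfolding g_def c_def
        by (intro sum_mono power_mono closest_point_le Kcl closest_point_in_set Kne) auto
      also have "\<dots> = (\<Sum>q\<in>V. u q \<bullet> u q + 2 * (u q \<bullet> h) + h \<bullet> h)"
        by (intro sum.cong refl) (simp add: u_def dist_norm power2_norm_eq_inner algebra_simps inner_add inner_diff inner_commute)
      also have "\<dots> = g vs + 2 * (S \<bullet> h) + N * (h \<bullet> h)"
        unfolding g_def S_def N_def
        by (simp add: sum.distrib sum_distrib_left inner_sum_left u_def dist_norm power2_norm_eq_inner c_def)
      also have "\<dots> = g vs - (S \<bullet> S) / N"
        using Npos unfolding h_def by (simp add: field_simps power2_eq_square)
      finally have "g (vs + h) \<le> g vs - (S \<bullet> S) / N" .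
      with vsmin[of "vs + h"] have "(S \<bullet> S) / N \<le> 0" by linarith
      hence "S \<bullet> S \<le> 0" using Npos by (simp add: divide_le_0_iff)
      hence "S \<bullet> S = 0" using inner_ge_zero[of S] by linarith
      thus ?thesis by simp
    qed
    have dimU: "dim (u ` V) \<le> d"
    proof (cases "\<exists>j\<in>V. u j \<noteq> 0")
      case True
      then obtain j where j: "j \<in> V" by blast
      have "u j = - (\<Sum>q\<in>V - {j}. u q)"
        using S0 j finV unfolding S_def by (simp add: sum.remove eq_neg_iff_add_eq_0)
      moreover have "(\<Sum>q\<in>V - {j}. u q) \<in> span (u ` (V - {j}))"
        by (intro span_sum span_base) auto
      ultimately have "u j \<in> span (u ` (V - {j}))"
        by (simp add: span_neg)
      hence "span (u ` V) = span (u ` (V - {j}))"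
        using j by (metis image_insert insert_Diff span_redundant)
      hence "dim (u ` V) = dim (u ` (V - {j}))" by (metis dim_span)
      also have "\<dots> \<le> card (u ` (V - {j}))" using finV by (simp add: dim_le_card')
      also have "\<dots> \<le> card (V - {j})" using finV card_image_le by blast
      also have "\<dots> \<le> d" using assms(4) j finV unfolding V_def by simp
      finally show ?thesis .
    next
      case False
      hence "u ` V \<subseteq> {0}" by auto
      thus ?thesis by (metis dim_eq_0 le0)
    qed
    obtain xi :: "'a set" where xi: "subspace xi" "u ` V \<subseteq> xi" "dim xi = d"
      using exists_superspace[OF dimU] assms(5) by auto
    obtain v where v: "v \<in> xi" "(\<lambda>x. x + v) ` proj_set xi Q \<subseteq> proj_set xi L"
      using assms(6)[OF xi(1,3)] by blast
    have key: "u q \<bullet> (v - vs) + u q \<bullet> u q \<le> 0" if q: "q \<in> V" for q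
    proof -
      have "orth_proj xi q + v \<in> proj_set xi L"
        using v(2) q VQ unfolding proj_set_def by blast
      then obtain l where l: "l \<in> L" "orth_proj xi q + v = orth_proj xi l"
        unfolding proj_set_def by blast
      have uxi: "u q \<in> xi" using xi(2) q by blast
      have "u q \<bullet> (orth_proj xi q + v) = u q \<bullet> orth_proj xi l" using l by simp
      hence e: "u q \<bullet> q + u q \<bullet> v = u q \<bullet> l"
        by (simp add: inner_add_right orth_proj_inner[OF xi(1) uxi])
      have "l - q \<in> K q" unfolding K_def using l by blast
      hence "(vs - c q vs) \<bullet> ((l - q) - c q vs) \<le> 0"
        unfolding c_def by (rule closest_point_dot[OF Kcv Kcl])
      hence "u q \<bullet> (l - q - c q vs) \<le> 0" unfolding u_def .
      moreover have "c q vs = vs - u q" unfolding u_def by simp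
      ultimately show ?thesis using e by (simp add: inner_diff_right inner_add_right)
    qed
    have "(\<Sum>q\<in>V. u q \<bullet> (v - vs)) = S \<bullet> (v - vs)" unfolding S_def by (simp add: inner_sum_left)
    hence sum0: "(\<Sum>q\<in>V. u q \<bullet> (v - vs)) = 0" using S0 by simp
    have "(\<Sum>q\<in>V. u q \<bullet> (v - vs) + u q \<bullet> u q) \<le> 0"
      using key by (simp add: sum_nonpos)
    hence "(\<Sum>q\<in>V. u q \<bullet> u q) \<le> 0" using sum0 by (simp add: sum.distrib)
    hence "\<forall>q\<in>V. u q \<bullet> u q = 0"
      using sum_nonneg_eq_0_iff[OF finV, of "\<lambda>q. u q \<bullet> u q"]
      by (metis (no_types, lifting) antisym inner_ge_zero sum_nonneg)
    hence inL: "vs + q \<in> L" if "q \<in> V" for q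
    proof -
      have "u q = 0" using that \<open>\<forall>q\<in>V. u q \<bullet> u q = 0\<close> by simp
      hence "vs = c q vs" unfolding u_def by simp
      hence "vs \<in> K q" unfolding c_def using closest_point_in_set Kcl Kne by metis
      thus ?thesis unfolding K_def by auto
    qed
    have "(\<lambda>x. x + vs) ` Q = (+) vs ` (convex hull V)" using QV by (simp add: add.commute)
    also have "\<dots> = convex hull ((+) vs ` V)" by (simp add: convex_hull_translation)
    also have "\<dots> \<subseteq> L" using inL assms(2) by (intro hull_minimal) auto
    finally show ?thesis by blast
  qed
qed

end
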